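(* Let $n,p\ge1$ and $\alpha\in\widehat F_{(n,p)}$, with fine-degree components $\alpha_{\underline{k}}$. If $\lambda_i(\alpha)=0$ for some $i\in\{1,\dots,n\}$, then $\alpha_{\underline{k}}=0$ unless the $i$-th column of $\mathrm{supp}(\underline{k})$ is nonempty. Similarly, if $\rho_j(\alpha)=0$ for some $j\in\{1,\dots,p\}$, then $\alpha_{\underline{k}}=0$ unless the $j$-th line of $\mathrm{supp}(\underline{k})$ is nonempty.
   Context: Work over a field of characteristic $0$. $F_{(m,q)}$ is the Lie algebra generated by $x_{i,j}$, $(i,j)\in\{1,\dots,m\}\times\{1,\dots,q\}$, with defining relations $[x_{i,j},x_{i',j'}]=0$ whenever $i\ne i'$ and $j\ne j'$. It is graded by the fine degree in $\bigoplus_{(i,j)}\mathbb{N}\epsilon_{(i,j)}$ with $\deg x_{i,j}=\epsilon_{(i,j)}$, and by total degree ($\deg x_{i,j}=1$); $\widehat F_{(m,q)}$ is the completion for the total degree. For $\underline{k}=\sum k_{(i,j)}\epsilon_{(i,j)}$, $\mathrm{supp}(\underline{k})=\{(i,j)\mid k_{(i,j)}\ne0\}$; the $i$-th column of a set $S$ is $S\cap(\{i\}\times\{1,\dots,p\})$, the $j$-th line is $S\cap(\{1,\dots,n\}\times\{j\})$. $\lambda_i:\widehat F_{(n,p)}\to\widehat F_{(n-1,p)}$ is the continuous Lie morphism with $x_{i',j'}\mapsto x_{i',j'}$ if $i'<i$, $0$ if $i'=i$, $x_{i'-1,j'}$ if $i'>i$; $\rho_j:\widehat F_{(n,p)}\to\widehat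 F_{(n,p-1)}$ is defined analogously in the second index. *)

theory Defs
  imports Main
begin

text \<open>Formal Lie terms over a scalar field 'a, with generators Gen i j (= x_{i,j}).\<close>
datatype 'a lie = Gen nat nat | Zero | Add "'a lie" "'a lie" | Smul 'a "'a lie" | Br "'a lie" "'a lie"

fun wf_lie :: "nat \<Rightarrow> nat \<Rightarrow> 'a lie \<Rightarrow> bool" where
  "wf_lie n p (Gen i j) = (1 \<le> i \<and> i \<le> n \<and> 1 \<le> j \<and> j \<le> p)"
| "wf_lie n p Zero = True"
| "wf_lie n p (Add s t) = (wf_lie n p s \<and> wf_lie n p t)"
| "wf_lie n p (Smul a t) = wf_lie n p t"
| "wf_lie n p (Br s t) = (wf_lie n p s \<and> wf_lie n p t)"

text \<open>The congruence presenting F_(n,p): Lie algebra axioms plus the defining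
  relations [x_{i,j}, x_{i',j'}] = 0 for i <> i' and j <> j'.\<close>
inductive lie_eqv :: "nat \<Rightarrow> nat \<Rightarrow> 'a::field lie \<Rightarrow> 'a lie \<Rightarrow> bool" for n p where
  refl: "lie_eqv n p t t"
| sym: "lie_eqv n p s t \<Longrightarrow> lie_eqv n p t s"
| trans: "lie_eqv n p s t \<Longrightarrow> lie_eqv n p t u \<Longrightarrow> lie_eqv n p s u"
| cong_add: "lie_eqv n p s s' \<Longrightarrow> lie_eqv n p t t' \<Longrightarrow> lie_eqv n p (Add s t) (Add s' t')"
| cong_smul: "lie_eqv n p s s' \<Longrightarrow> lie_eqv n p (Smul a s) (Smul a s')"
| cong_br: "lie_eqv n p s s' \<Longrightarrow> lie_eqv n p t t' \<Longrightarrow> lie_eqv n p (Br s t) (Br s' t')"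
| add_assoc: "lie_eqv n p (Add (Add s t) u) (Add s (Add t u))"
| add_comm: "lie_eqv n p (Add s t) (Add t s)"
| add_zero: "lie_eqv n p (Add t Zero) t"
| add_neg: "lie_eqv n p (Add t (Smul (-1) t)) Zero"
| smul_one: "lie_eqv n p (Smul 1 t) t"
| smul_mult: "lie_eqv n p (Smul a (Smul b t)) (Smul (a * b) t)"
| smul_add_scalar: "lie_eqv n p (Smul (a + b) t) (Add (Smul a t) (Smul b t))"
| smul_add: "lie_eqv n p (Smul a (Add s t)) (Add (Smul a s) (Smul a t))"
| br_add_left: "lie_eqv n p (Br (Add s t) u) (Add (Br s u) (Br t u))"
| br_smul_left: "lie_eqv n p (Br (Smul a s) t) (Smul a (Br s t))"
| br_alt: "lie_eqv n p (Br t t) Zero"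
| jacobi: "lie_eqv n p (Add (Br s (Br t u)) (Add (Br t (Br u s)) (Br u (Br s t)))) Zero"
| rel: "\<lbrakk>1 \<le> i; i \<le> n; 1 \<le> i'; i' \<le> n; 1 \<le> j; j \<le> p; 1 \<le> j'; j' \<le> p;
         i \<noteq> i'; j \<noteq> j'\<rbrakk> \<Longrightarrow> lie_eqv n p (Br (Gen i j) (Gen i' j')) Zero"

text \<open>Fine degrees: elements of the free commutative monoid on {1..n} x {1..p}.\<close>
type_synonym fdeg = "nat \<times> nat \<Rightarrow> nat"

definition fsupp :: "fdeg \<Rightarrow> (nat \<times> nat) set" where
  "fsupp k = {x. k x \<noteq> 0}"

definition degs :: "nat \<Rightarrow> nat \<Rightarrow> fdeg set" where
  "degs n p = {k. fsupp k \<subseteq> {1..n} \<times> {1..p}}"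

definition tdeg :: "nat \<Rightarrow> nat \<Rightarrow> fdeg \<Rightarrow> nat" where
  "tdeg n p k = (\<Sum>x\<in>{1..n} \<times> {1..p}. k x)"

definition column :: "nat \<Rightarrow> nat \<Rightarrow> (nat \<times> nat) set \<Rightarrow> (nat \<times> nat) set" where
  "column p i S = S \<inter> ({i} \<times> {1..p})"

definition line :: "nat \<Rightarrow> nat \<Rightarrow> (nat \<times> nat) set \<Rightarrow> (nat \<times> nat) set" where
  "line n j S = S \<inter> ({1..n} \<times> {j})"

inductive homog :: "'a lie \<Rightarrow> fdeg \<Rightarrow> bool" where
  "homog (Gen i j) (\<lambda>x. if x = (i, j) then 1 else 0)"
| "homog Zero k"
| "homog s k \<Longrightarrow> homog t k \<Longrightarrow> homog (Add s t) k"
| "homog t k \<Longrightarrow> homog (Smul a t) k"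
| "homog s k1 \<Longrightarrow> homog t k2 \<Longrightarrow> homog (Br s t) (\<lambda>x. k1 x + k2 x)"

text \<open>An element of the completion of F_(n,p) is given by its family of fine-degree
  components alpha k in F_(n,p)_k (k ranging over degs n p).\<close>
definition in_completion :: "nat \<Rightarrow> nat \<Rightarrow> (fdeg \<Rightarrow> 'a lie) \<Rightarrow> bool" where
  "in_completion n p \<alpha> \<longleftrightarrow> (\<forall>k\<in>degs n p. wf_lie n p (\<alpha> k) \<and> homog (\<alpha> k) k)"

definition lsum :: "'b set \<Rightarrow> ('b \<Rightarrow> 'a lie) \<Rightarrow> 'a lie" where
  "lsum S f = foldr (\<lambda>x t. Add (f x) t) (SOME xs. distinct xs \<and> set xs = S) Zero"

fun lam :: "nat \<Rightarrow> 'a lie \<Rightarrow> 'a lie" where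
  "lam i (Gen i' j') = (if i' < i then Gen i' j' else if i' = i then Zero else Gen (i' - 1) j')"
| "lam i Zero = Zero"
| "lam i (Add s t) = Add (lam i s) (lam i t)"
| "lam i (Smul a t) = Smul a (lam i t)"
| "lam i (Br s t) = Br (lam i s) (lam i t)"

fun rho :: "nat \<Rightarrow> 'a lie \<Rightarrow> 'a lie" where
  "rho j (Gen i' j') = (if j' < j then Gen i' j' else if j' = j then Zero else Gen i' (j' - 1))"
| "rho j Zero = Zero"
| "rho j (Add s t) = Add (rho j s) (rho j t)"
| "rho j (Smul a t) = Smul a (rho j t)"
| "rho j (Br s t) = Br (rho j s) (rho j t)"

definition lam_deg :: "nat \<Rightarrow> fdeg \<Rightarrow> fdeg" where
  "lam_deg i k = (\<lambda>(a, b). if a < i then k (a, b) else k (a + 1, b))"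

definition rho_deg :: "nat \<Rightarrow> fdeg \<Rightarrow> fdeg" where
  "rho_deg j k = (\<lambda>(a, b). if b < j then k (a, b) else k (a, b + 1))"

text \<open>Continuous extensions to the completions (both maps preserve total degree, so the
  component of fine degree k' of the image is the finite sum of the images of the
  components alpha k with the same total degree whose image degree is k').\<close>
definition lam_hat :: "nat \<Rightarrow> nat \<Rightarrow> nat \<Rightarrow> (fdeg \<Rightarrow> 'a lie) \<Rightarrow> fdeg \<Rightarrow> 'a lie" where
  "lam_hat n p i \<alpha> k' =
     lsum {k \<in> degs n p. tdeg n p k = tdeg (n - 1) p k' \<and> lam_deg i k = k'} (\<lambda>k. lam i (\<alpha> k))"

definition rho_hat :: "nat \<Rightarrow> nat \<Rightarrow> nat \<Rightarrow> (fdeg \<Rightarrow> 'a lie) \<Rightarrow> fdeg \<Rightarrow> 'a lie" where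
  "rho_hat n p j \<alpha> k' =
     lsum {k \<in> degs n p. tdeg n p k = tdeg n (p - 1) k' \<and> rho_deg j k = k'} (\<lambda>k. rho j (\<alpha> k))"

end

theory Submission
  imports Defs
begin

fun gens :: "'a lie \<Rightarrow> (nat \<times> nat) set" where
  "gens (Gen i j) = {(i,j)}"
| "gens Zero = {}"
| "gens (Add s t) = gens s \<union> gens t"
| "gens (Smul a t) = gens t"
| "gens (Br s t) = gens s \<union> gens t"

lemma homog_gens: "homog t k \<Longrightarrow> x \<in> gens t \<Longrightarrow> k x \<noteq> 0"
  by (induction rule: homog.induct) auto

fun embl :: "nat \<Rightarrow> 'a lie \<Rightarrow> 'a lie" where
  "embl i (Gen a b) = Gen (if a < i then a else a + 1) b"
| "embl i Zero = Zero"
| "embl i (Add s t) = Add (embl i s) (embl i t)"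
| "embl i (Smul c t) = Smul c (embl i t)"
| "embl i (Br s t) = Br (embl i s) (embl i t)"

fun embr :: "nat \<Rightarrow> 'a lie \<Rightarrow> 'a lie" where
  "embr j (Gen a b) = Gen a (if b < j then b else b + 1)"
| "embr j Zero = Zero"
| "embr j (Add s t) = Add (embr j s) (embr j t)"
| "embr j (Smul c t) = Smul c (embr j t)"
| "embr j (Br s t) = Br (embr j s) (embr j t)"

lemma embl_lam: "(\<forall>x\<in>gens t. fst x \<noteq> i) \<Longrightarrow> embl i (lam i t) = t"
  by (induction t) auto

lemma embr_rho: "(\<forall>x\<in>gens t. snd x \<noteq> j) \<Longrightarrow> embr j (rho j t) = t"
  by (induction t) auto

lemma embl_eqv:
  assumes "lie_eqv (n - 1) p s t" "i \<le> n" "1 \<le> i"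
  shows "lie_eqv n p (embl i s) (embl i t)"
  using assms(1)
proof (induction rule: lie_eqv.induct)
  case (rel a a' b b')
  show ?case apply (simp only: embl.simps embr.simps) apply (rule lie_eqv.rel) using rel assms by auto
qed (simp_all, (metis lie_eqv.intros)+)

lemma embr_eqv:
  assumes "lie_eqv n (p - 1) s t" "j \<le> p" "1 \<le> j"
  shows "lie_eqv n p (embr j s) (embr j t)"
  using assms(1)
proof (induction rule: lie_eqv.induct)
  case (rel a a' b b')
  show ?case apply (simp only: embl.simps embr.simps) apply (rule lie_eqv.rel) using rel assms by auto
qed (simp_all, (metis lie_eqv.intros)+)

lemma dist_single: "distinct xs \<Longrightarrow> set xs = {k} \<Longrightarrow> xs = [k]"
  by (cases xs; cases "tl xs") auto

lemma some_single: "(SOME xs. distinct xs \<and> set xs = {k}) = [k]"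
proof -
  have "\<exists>xs. distinct xs \<and> set xs = {k}" by (rule exI[of _ "[k]"]) simp
  hence h: "distinct (SOME xs. distinct xs \<and> set xs = {k}) \<and> set (SOME xs. distinct xs \<and> set xs = {k}) = {k}"
    by (rule someI_ex)
  show ?thesis
    by (rule dist_single) (use h in \<open>simp_all only:\<close>)
qed

lemma lsum_single: "lsum {k} f = Add (f k) Zero"
  unfolding lsum_def some_single by simp

lemma sum_skip:
  fixes G :: "nat \<Rightarrow> nat"
  assumes "1 \<le> i" "i \<le> n"
  shows "(\<Sum>a\<in>{1..n}. G a) = (\<Sum>a\<in>{1..n-1}. G (if a < i then a else a + 1)) + G i"
proof -
  let ?f = "\<lambda>a::nat. if a < i then a else a + 1"
  have img: "?f ` {1..n-1} = {1..n} - {i}"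
  proof
    show "?f ` {1..n-1} \<subseteq> {1..n} - {i}" using assms by auto
    show "{1..n} - {i} \<subseteq> ?f ` {1..n-1}"
    proof
      fix x assume x: "x \<in> {1..n} - {i}"
      show "x \<in> ?f ` {1..n-1}"
      proof (cases "x < i")
        case True then show ?thesis using x assms by (intro image_eqI[of _ _ x]) auto
      next
        case False then show ?thesis using x assms by (intro image_eqI[of _ _ "x - 1"]) auto
      qed
    qed
  qed
  have inj: "inj_on ?f {1..n-1}" by (auto simp: inj_on_def split: if_splits)
  have "(\<Sum>a\<in>{1..n}. G a) = G i + (\<Sum>a\<in>{1..n} - {i}. G a)"
    using assms by (subst sum.remove[of _ i]) auto
  also have "(\<Sum>a\<in>{1..n} - {i}. G a) = (\<Sum>a\<in>{1..n-1}. G (?f a))"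
    using sum.reindex[OF inj, of G] img by simp
  finally show ?thesis by simp
qed

lemma tdeg_lam:
  assumes "1 \<le> i" "i \<le> n"
  shows "tdeg n p k = tdeg (n - 1) p (lam_deg i k) + (\<Sum>b\<in>{1..p}. k (i, b))"
proof -
  have "tdeg n p k = (\<Sum>a\<in>{1..n}. \<Sum>b\<in>{1..p}. k (a, b))"
    unfolding tdeg_def by (simp add: sum.cartesian_product)
  also have "\<dots> = (\<Sum>a\<in>{1..n-1}. \<Sum>b\<in>{1..p}. k (if a < i then a else a + 1, b)) + (\<Sum>b\<in>{1..p}. k (i, b))"
    by (rule sum_skip[OF assms])
  also have "(\<Sum>a\<in>{1..n-1}. \<Sum>b\<in>{1..p}. k (if a < i then a else a + 1, b)) = tdeg (n - 1) p (lam_deg i k)"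
    unfolding tdeg_def lam_deg_def by (simp add: sum.cartesian_product, intro sum.cong) auto
  finally show ?thesis .
qed

lemma tdeg_rho:
  assumes "1 \<le> j" "j \<le> p"
  shows "tdeg n p k = tdeg n (p - 1) (rho_deg j k) + (\<Sum>a\<in>{1..n}. k (a, j))"
proof -
  have "tdeg n p k = (\<Sum>a\<in>{1..n}. \<Sum>b\<in>{1..p}. k (a, b))"
    unfolding tdeg_def by (simp add: sum.cartesian_product)
  also have "\<dots> = (\<Sum>a\<in>{1..n}. (\<Sum>b\<in>{1..p-1}. k (a, if b < j then b else b + 1)) + k (a, j))"
    by (rule sum.cong[OF HOL.refl], rule sum_skip[OF assms])
  also have "\<dots> = (\<Sum>a\<in>{1..n}. \<Sum>b\<in>{1..p-1}. k (a, if b < j then b else b + 1)) + (\<Sum>a\<in>{1..n}. k (a, j))"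
    by (simp add: sum.distrib)
  also have "(\<Sum>a\<in>{1..n}. \<Sum>b\<in>{1..p-1}. k (a, if b < j then b else b + 1)) = tdeg n (p - 1) (rho_deg j k)"
    unfolding tdeg_def rho_deg_def by (simp add: sum.cartesian_product, intro sum.cong) auto
  finally show ?thesis .
qed


lemma lam_set:
  assumes i: "1 \<le> i" "i \<le> n" and k: "k \<in> degs n p" and c: "column p i (fsupp k) = {}"
  shows "{k2 \<in> degs n p. tdeg n p k2 = tdeg (n - 1) p (lam_deg i k) \<and> lam_deg i k2 = lam_deg i k} = {k}"
    and "lam_deg i k \<in> degs (n - 1) p"
proof -
  have kz: "k x = 0" if "x \<notin> {1..n} \<times> {1..p}" for x
    using k that unfolding degs_def fsupp_def by auto
  have kz': "k x \<noteq> 0 \<Longrightarrow> x \<in> {1..n} \<times> {1..p}" for x using k unfolding degs_def fsupp_def by auto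
  have kc: "k (i, b) = 0" for b
    using c kz[of "(i,b)"] i unfolding column_def fsupp_def by (cases "1 \<le> b \<and> b \<le> p") auto
  show "lam_deg i k \<in> degs (n - 1) p"
    unfolding degs_def fsupp_def lam_deg_def
  proof (simp only: mem_Collect_eq, rule subsetI)
    fix x assume A: "x \<in> {x. (case x of (a, b) \<Rightarrow> if a < i then k (a, b) else k (a + 1, b)) \<noteq> 0}"
    obtain a b where x: "x = (a, b)" by (cases x)
    have "(if a < i then k (a, b) else k (a + 1, b)) \<noteq> 0" using A x by simp
    then show "x \<in> {1..n - 1} \<times> {1..p}"
      using kz'[of "(a,b)"] kz'[of "(Suc a,b)"] i x
      by (cases "a < i") auto
  qed
  have tk: "tdeg n p k = tdeg (n - 1) p (lam_deg i k)"
    using tdeg_lam[OF i, of p k] kc by simp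
  show "{k2 \<in> degs n p. tdeg n p k2 = tdeg (n - 1) p (lam_deg i k) \<and> lam_deg i k2 = lam_deg i k} = {k}"
  proof (rule set_eqI, rule iffI)
    fix k2 assume "k2 \<in> {k2 \<in> degs n p. tdeg n p k2 = tdeg (n - 1) p (lam_deg i k) \<and> lam_deg i k2 = lam_deg i k}"
    then have k2: "k2 \<in> degs n p" and t2: "tdeg n p k2 = tdeg (n - 1) p (lam_deg i k)"
      and l2: "lam_deg i k2 = lam_deg i k" by auto
    have k2z: "k2 x = 0" if "x \<notin> {1..n} \<times> {1..p}" for x
      using k2 that unfolding degs_def fsupp_def by auto
    have "(\<Sum>b\<in>{1..p}. k2 (i, b)) = 0"
      using tdeg_lam[OF i, of p k2] t2 l2 by simp
    then have "k2 (i, b) = 0" if "b \<in> {1..p}" for b using that by simp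
    then have k2c: "k2 (i, b) = 0" for b using k2z[of "(i,b)"] by (cases "b \<in> {1..p}") auto
    have "k2 (a, b) = k (a, b)" for a b
    proof -
      consider "a < i" | "a = i" | "a > i" by arith
      then show ?thesis
      proof cases
        case 1 then show ?thesis using fun_cong[OF l2, of "(a,b)"] by (simp add: lam_deg_def)
      next
        case 2 then show ?thesis using k2c kc by simp
      next
        case 3
        then have "\<not> a - 1 < i" "a - 1 + 1 = a" by auto
        then show ?thesis using fun_cong[OF l2, of "(a - 1,b)"] unfolding lam_deg_def by simp
      qed
    qed
    then show "k2 \<in> {k}" by (auto intro: ext)
  next
    fix k2 assume "k2 \<in> {k}" then show "k2 \<in> {k2 \<in> degs n p. tdeg n p k2 = tdeg (n - 1) p (lam_deg i k) \<and> lam_deg i k2 = lam_deg i k}"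
      using k tk by simp
  qed
qed

lemma rho_set:
  assumes j: "1 \<le> j" "j \<le> p" and k: "k \<in> degs n p" and c: "line n j (fsupp k) = {}"
  shows "{k2 \<in> degs n p. tdeg n p k2 = tdeg n (p - 1) (rho_deg j k) \<and> rho_deg j k2 = rho_deg j k} = {k}"
    and "rho_deg j k \<in> degs n (p - 1)"
proof -
  have kz: "k x = 0" if "x \<notin> {1..n} \<times> {1..p}" for x
    using k that unfolding degs_def fsupp_def by auto
  have kz': "k x \<noteq> 0 \<Longrightarrow> x \<in> {1..n} \<times> {1..p}" for x using k unfolding degs_def fsupp_def by auto
  have kc: "k (a, j) = 0" for a
    using c kz[of "(a,j)"] j unfolding line_def fsupp_def by (cases "1 \<le> a \<and> a \<le> n") auto
  show "rho_deg j k \<in> degs n (p - 1)"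
    unfolding degs_def fsupp_def rho_deg_def
  proof (simp only: mem_Collect_eq, rule subsetI)
    fix x assume A: "x \<in> {x. (case x of (a, b) \<Rightarrow> if b < j then k (a, b) else k (a, b + 1)) \<noteq> 0}"
    obtain a b where x: "x = (a, b)" by (cases x)
    have "(if b < j then k (a, b) else k (a, b + 1)) \<noteq> 0" using A x by simp
    then show "x \<in> {1..n} \<times> {1..p - 1}"
      using kz'[of "(a,b)"] kz'[of "(a,Suc b)"] j x
      by (cases "b < j") auto
  qed
  have tk: "tdeg n p k = tdeg n (p - 1) (rho_deg j k)"
    using tdeg_rho[OF j, of n k] kc by simp
  show "{k2 \<in> degs n p. tdeg n p k2 = tdeg n (p - 1) (rho_deg j k) \<and> rho_deg j k2 = rho_deg j k} = {k}"
  proof (rule set_eqI, rule iffI)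
    fix k2 assume "k2 \<in> {k2 \<in> degs n p. tdeg n p k2 = tdeg n (p - 1) (rho_deg j k) \<and> rho_deg j k2 = rho_deg j k}"
    then have k2: "k2 \<in> degs n p" and t2: "tdeg n p k2 = tdeg n (p - 1) (rho_deg j k)"
      and l2: "rho_deg j k2 = rho_deg j k" by auto
    have k2z: "k2 x = 0" if "x \<notin> {1..n} \<times> {1..p}" for x
      using k2 that unfolding degs_def fsupp_def by auto
    have "(\<Sum>a\<in>{1..n}. k2 (a, j)) = 0"
      using tdeg_rho[OF j, of n k2] t2 l2 by simp
    then have "k2 (a, j) = 0" if "a \<in> {1..n}" for a using that by simp
    then have k2c: "k2 (a, j) = 0" for a using k2z[of "(a,j)"] by (cases "a \<in> {1..n}") auto
    have "k2 (a, b) = k (a, b)" for a b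
    proof -
      consider "b < j" | "b = j" | "b > j" by arith
      then show ?thesis
      proof cases
        case 1 then show ?thesis using fun_cong[OF l2, of "(a,b)"] by (simp add: rho_deg_def)
      next
        case 2 then show ?thesis using k2c kc by simp
      next
        case 3
        then have "\<not> b - 1 < j" "b - 1 + 1 = b" by auto
        then show ?thesis using fun_cong[OF l2, of "(a,b - 1)"] unfolding rho_deg_def by simp
      qed
    qed
    then show "k2 \<in> {k}" by (auto intro: ext)
  next
    fix k2 assume "k2 \<in> {k}" then show "k2 \<in> {k2 \<in> degs n p. tdeg n p k2 = tdeg n (p - 1) (rho_deg j k) \<and> rho_deg j k2 = rho_deg j k}"
      using k tk by simp
  qed
qed

theorem lemma1p6:
  fixes n p :: nat and \<alpha> :: "fdeg \<Rightarrow> 'a::field_char_0 lie"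
  assumes "1 \<le> n" and "1 \<le> p" and "in_completion n p \<alpha>"
  shows "(\<forall>i\<in>{1..n}. (\<forall>k'\<in>degs (n - 1) p. lie_eqv (n - 1) p (lam_hat n p i \<alpha> k') Zero) \<longrightarrow>
            (\<forall>k\<in>degs n p. column p i (fsupp k) = {} \<longrightarrow> lie_eqv n p (\<alpha> k) Zero))
       \<and> (\<forall>j\<in>{1..p}. (\<forall>k'\<in>degs n (p - 1). lie_eqv n (p - 1) (rho_hat n p j \<alpha> k') Zero) \<longrightarrow>
            (\<forall>k\<in>degs n p. line n j (fsupp k) = {} \<longrightarrow> lie_eqv n p (\<alpha> k) Zero))"
proof (intro conjI ballI impI)
  fix i k assume i: "i \<in> {1..n}" and H: "\<forall>k'\<in>degs (n - 1) p. lie_eqv (n - 1) p (lam_hat n p i \<alpha> k') Zero"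
    and k: "k \<in> degs n p" and c: "column p i (fsupp k) = {}"
  have i1: "1 \<le> i" "i \<le> n" using i by auto
  have hom: "homog (\<alpha> k) k" using assms(3) k unfolding in_completion_def by auto
  have g: "\<forall>x\<in>gens (\<alpha> k). fst x \<noteq> i"
  proof
    fix x assume x: "x \<in> gens (\<alpha> k)"
    have "x \<in> fsupp k" using homog_gens[OF hom x] unfolding fsupp_def by auto
    moreover have "fsupp k \<subseteq> {1..n} \<times> {1..p}" using k unfolding degs_def by auto
    ultimately show "fst x \<noteq> i" using c unfolding column_def by (cases x) auto
  qed
  have "lam_hat n p i \<alpha> (lam_deg i k) = Add (lam i (\<alpha> k)) Zero"
    unfolding lam_hat_def lam_set(1)[OF i1 k c] lsum_single ..
  then have "lie_eqv (n - 1) p (Add (lam i (\<alpha> k)) Zero) Zero"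
    using H lam_set(2)[OF i1 k c] by metis
  from embl_eqv[OF this i1(2) i1(1)] have "lie_eqv n p (Add (\<alpha> k) Zero) Zero"
    using embl_lam[OF g] by simp
  then show "lie_eqv n p (\<alpha> k) Zero"
    by (meson lie_eqv.add_zero lie_eqv.sym lie_eqv.trans)
next
  fix j k assume j: "j \<in> {1..p}" and H: "\<forall>k'\<in>degs n (p - 1). lie_eqv n (p - 1) (rho_hat n p j \<alpha> k') Zero"
    and k: "k \<in> degs n p" and c: "line n j (fsupp k) = {}"
  have j1: "1 \<le> j" "j \<le> p" using j by auto
  have hom: "homog (\<alpha> k) k" using assms(3) k unfolding in_completion_def by auto
  have g: "\<forall>x\<in>gens (\<alpha> k). snd x \<noteq> j"
  proof
    fix x assume x: "x \<in> gens (\<alpha> k)"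
    have "x \<in> fsupp k" using homog_gens[OF hom x] unfolding fsupp_def by auto
    moreover have "fsupp k \<subseteq> {1..n} \<times> {1..p}" using k unfolding degs_def by auto
    ultimately show "snd x \<noteq> j" using c unfolding line_def by (cases x) auto
  qed
  have "rho_hat n p j \<alpha> (rho_deg j k) = Add (rho j (\<alpha> k)) Zero"
    unfolding rho_hat_def rho_set(1)[OF j1 k c] lsum_single ..
  then have "lie_eqv n (p - 1) (Add (rho j (\<alpha> k)) Zero) Zero"
    using H rho_set(2)[OF j1 k c] by metis
  from embr_eqv[OF this j1(2) j1(1)] have "lie_eqv n p (Add (\<alpha> k) Zero) Zero"
    using embr_rho[OF g] by simp
  then show "lie_eqv n p (\<alpha> k) Zero"
    by (meson lie_eqv.add_zero lie_eqv.sym lie_eqv.trans)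
qed

end
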